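(* Let $(\Phi,\mathtt{Prg},\mathrm{AT})$ be a CLC SPL with $\Phi=(\mathcal F,\phi)$. If a judgment $\theta;\Delta\vdash e:T$ occurs in a derivation of $\phi\vdash\mathtt{Prg}\ \textsc{ok}$ in the family-based type system, then $\theta\models\mathrm{AT}(T)$.
   Context: $\theta\models\theta'$ means $\theta\Rightarrow\theta'$ is a valid propositional formula. **Lightweight C (LC).** Types: $T ::= \mathtt{int}\mid \mathtt{void}* \mid \mathtt{struct}\ s*$. Expressions: $e ::= n \mid \mathtt{NULL}\mid x \mid f(e_1,\dots,e_k)$ ($k\ge0$) $\mid e\texttt{->}m \mid e\texttt{->}m=e \mid e\,?\,e:e \mid (e_1,\dots,e_k)$ ($k\ge1$) $\mid \mathsf{uop}\ e\mid e\ \mathsf{bop}\ e\mid \mathtt{MALLOC}(\mathtt{struct}\ s)\mid \mathtt{MFREE}(e)$. A struct definition is $\mathtt{struct}\ s\{T_1\,m_1;\dots;T_k\,m_k;\};$; a function definition is $T_0\ f(T_1\,x_1,\dots,T_k\,x_k)\{\mathtt{return}\ e;\}$; a program $\mathtt{Prg}=\overline{SD}\ \overline{FD}$ is a sequence of struct definitions followed by function definitions (distinct names), regarded as a finite map ($\mathtt{Prg}(s)$, $\mathtt{Prg}(s)(m)=T\,m$, $\mathtt{Prg}(f)$). $\mathtt{Prg}$ is *sane* if every struct name occurring in it is defined, every function name occurring in its function definitions is defined, and $\mathtt{Prg}(\mathtt{main})=\mathtt{int\ main}()\{\mathtt{return}\ e;\}$. Operator types: unary $-:(\mathtt{int})\to\mathtt{int}$,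 $!:(T)\to\mathtt{int}$; binary arithmetic, logical and ordering operators $(\mathtt{int},\mathtt{int})\to\mathtt{int}$; $==,!=:(T,T)\to\mathtt{int}$. Subtyping $\le$: reflexive closure of $\mathtt{void}*\le\mathtt{struct}\ s*$; $\max_\le$ the greater of two comparable types. **CLC.** Feature model $\Phi=(\mathcal F,\phi)$; annotation table $\mathrm{AT}$ assigns a propositional formula over $\mathcal F$ (default $1$) to each occurrence of: struct definitions, member declarations $T\,m$, function definitions, formal parameter declarations $T\,x$, arguments of function calls, elements of parenthesized sequences. $\mathrm{AT}(\mathtt{int})=\mathrm{AT}(\mathtt{void}* )=1$, $\mathrm{AT}(\mathtt{struct}\ s* )=\mathrm{AT}(\mathtt{Prg}(s))$; $\exists(e_1,\dots,e_n)=\mathrm{AT}(e_1)||\cdots||\mathrm{AT}(e_n)$; $\mathtt{neverLast}(k,(e_1,\dots,e_n))=\,!\mathrm{AT}(e_k)||\mathrm{AT}(e_{k+1})||\cdots||\mathrm{AT}(e_n)$. $\Delta$ maps parameter names to entries $x{:}T$ with $\psi$. Rules: (FT-prg) if $\mathtt{Prg}$ is sane, $\mathrm{AT}(\mathtt{main})=1$, $\mathtt{Prg}=\overline{SD}\,\overline{FD}$, $\phi\,\&\&\,\mathrm{AT}(SD)\vdash SD\ \textsc{ok}$ for each $SD$ and $\phi\,\&\&\,\mathrm{AT}(FD)\vdash FD\ \textsc{ok}$ for each $FD$, then $\phi\vdash\mathtt{Prg}\ \textsc{ok}$. (FT-struct) if $\theta\models\mathrm{AT}(T_i m_i)\Rightarrow\mathrm{AT}(T_i)$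 for all $i$ then $\theta\vdash\mathtt{struct}\ s\{\dots\}\ \textsc{ok}$. (FT-fun) if $\theta\models\mathrm{AT}(T_0)$, $\theta\models\mathrm{AT}(T_ix_i)\Rightarrow\mathrm{AT}(T_i)$ for all $i$, $\theta;x_1{:}T_1\text{ with }\mathrm{AT}(T_1x_1),\dots\vdash e:T'$, $T'\le T_0$, then $\theta\vdash T_0f(T_1x_1,\dots,T_kx_k)\{\mathtt{return}\ e;\}\ \textsc{ok}$. (FT-int) $\theta;\Delta\vdash n:\mathtt{int}$; (FT-null) $\theta;\Delta\vdash\mathtt{NULL}:\mathtt{void}*$; (FT-par) $x{:}T$ with $\psi\in\Delta$, $\theta\models\psi$ give $\theta;\Delta\vdash x:T$. (FT-app) $\mathtt{Prg}(f)=T_0f(T_1x_1,\dots,T_kx_k)\{\dots\}$, $\theta\models\mathrm{AT}(\mathtt{Prg}(f))$, and for each $i$: $\theta;\Delta\vdash e_i:T_i'$, $T_i'\le T_i$, $\theta\models\mathrm{AT}(e_i)\Leftrightarrow\mathrm{AT}(T_ix_i)$, give $\theta;\Delta\vdash f(e_1,\dots,e_k):T_0$. (FT-member) $\theta;\Delta\vdash e_0:\mathtt{struct}\ s*$, $\mathtt{Prg}(s)(m)=T\,m$, $\theta\models\mathrm{AT}(T\,m)$ give $\theta;\Delta\vdash e_0\texttt{->}m:T$; (FT-assign) additionally $\theta;\Delta\vdash e_1:T_1$, $T_1\le T$ give $\theta;\Delta\vdash e_0\texttt{->}m=e_1:T$. (FT-cond) $\theta;\Delta\vdash e_j:T_j$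 ($j=0,1,2$), $T_3=\max_\le\{T_1,T_2\}$ give $\theta;\Delta\vdash e_0?e_1:e_2:T_3$. (FT-seq) if $\theta\models\exists(e_1,\dots,e_n)$, $\theta\,\&\&\,\mathrm{AT}(e_i);\Delta\vdash e_i:T_i$ for all $i$, $T=T_n$, and $\theta\models\mathtt{neverLast}(i,(e_1,\dots,e_n))$ whenever $T_i\ne T$, then $\theta;\Delta\vdash(e_1,\dots,e_n):T$. (FT-uop) $\theta;\Delta\vdash e_0:T_0$ and $\mathsf{uop}:(T_0)\to\mathtt{int}$ give $\theta;\Delta\vdash\mathsf{uop}\,e_0:\mathtt{int}$; (FT-bop) $\theta;\Delta\vdash e_1:T_1$, $\theta;\Delta\vdash e_2:T_2$, $T_3=\max_\le\{T_1,T_2\}$, $\mathsf{bop}:(T_3,T_3)\to\mathtt{int}$ give $\theta;\Delta\vdash e_1\mathsf{bop}\,e_2:\mathtt{int}$. (FT-malloc) $s$ defined and $\theta\models\mathrm{AT}(\mathtt{Prg}(s))$ give $\theta;\Delta\vdash\mathtt{MALLOC}(\mathtt{struct}\ s):\mathtt{struct}\ s*$. (FT-mfree) $\theta;\Delta\vdash e_0:\mathtt{struct}\ s*$ gives $\theta;\Delta\vdash\mathtt{MFREE}(e_0):\mathtt{void}*$. *)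

theory Defs
  imports Main
begin

section \<open>Propositional formulas over the feature set (the type 'f)\<close>

datatype 'f form = FTrue | FFalse | FVar 'f | FNot "'f form" | FAnd "'f form" "'f form"
  | FOr "'f form" "'f form" | FImp "'f form" "'f form" | FIff "'f form" "'f form"

primrec eval :: "('f \<Rightarrow> bool) \<Rightarrow> 'f form \<Rightarrow> bool" where
  "eval v FTrue = True"
| "eval v FFalse = False"
| "eval v (FVar x) = v x"
| "eval v (FNot a) = (\<not> eval v a)"
| "eval v (FAnd a b) = (eval v a \<and> eval v b)"
| "eval v (FOr a b) = (eval v a \<or> eval v b)"
| "eval v (FImp a b) = (eval v a \<longrightarrow> eval v b)"
| "eval v (FIff a b) = (eval v a \<longleftrightarrow> eval v b)"

definition entails :: "'f form \<Rightarrow> 'f form \<Rightarrow> bool" where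
  "entails \<theta> \<theta>' \<longleftrightarrow> (\<forall>v. eval v (FImp \<theta> \<theta>'))"

fun ors :: "'f form list \<Rightarrow> 'f form" where
  "ors [] = FFalse"
| "ors [a] = a"
| "ors (a # as) = FOr a (ors as)"

section \<open>Syntax of LC, with the annotation table embedded at the annotated occurrences\<close>

type_synonym name = string

datatype ty = TInt | TVoidPtr | TStruct name

datatype uop = UNeg | UNot

datatype bop = BPlus | BMinus | BTimes | BDiv | BMod | BAnd | BOr
  | BLt | BLe | BGt | BGe | BEq | BNeq

datatype 'f exp =
    Num int
  | Null
  | Var name
  | App name "('f exp \<times> 'f form) list"
  | Member "'f exp" name
  | Assign "'f exp" name "'f exp"
  | Cond "'f exp" "'f exp" "'f exp"
  | Seq "('f exp \<times> 'f form) list"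
  | Uop uop "'f exp"
  | Bop bop "'f exp" "'f exp"
  | Malloc name
  | Mfree "'f exp"

datatype 'f sdef = SDef (sd_name: name) (sd_members: "(ty \<times> name \<times> 'f form) list") (sd_ann: "'f form")

datatype 'f fdef = FDef (fd_ret: ty) (fd_name: name) (fd_params: "(ty \<times> name \<times> 'f form) list")
  (fd_body: "'f exp") (fd_ann: "'f form")

datatype 'f prog = Prog (structs: "'f sdef list") (funs: "'f fdef list")

definition lookup_struct :: "'f prog \<Rightarrow> name \<Rightarrow> 'f sdef option" where
  "lookup_struct P s = map_of (map (\<lambda>sd. (sd_name sd, sd)) (structs P)) s"

definition lookup_fun :: "'f prog \<Rightarrow> name \<Rightarrow> 'f fdef option" where
  "lookup_fun P f = map_of (map (\<lambda>fd. (fd_name fd, fd)) (funs P)) f"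

definition lookup_member :: "'f sdef \<Rightarrow> name \<Rightarrow> (ty \<times> 'f form) option" where
  "lookup_member sd m = map_of (map (\<lambda>(T, m, \<psi>). (m, (T, \<psi>))) (sd_members sd)) m"

definition distinct_names :: "'f prog \<Rightarrow> bool" where
  "distinct_names P \<longleftrightarrow> distinct (map sd_name (structs P)) \<and> distinct (map fd_name (funs P))
     \<and> (\<forall>sd\<in>set (structs P). distinct (map (fst \<circ> snd) (sd_members sd)))"

primrec ty_structs :: "ty \<Rightarrow> name set" where
  "ty_structs TInt = {}"
| "ty_structs TVoidPtr = {}"
| "ty_structs (TStruct s) = {s}"

fun exp_structs :: "'f exp \<Rightarrow> name set" and exp_funs :: "'f exp \<Rightarrow> name set" where
  "exp_structs (Num n) = {}"
| "exp_structs Null = {}"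
| "exp_structs (Var x) = {}"
| "exp_structs (App f args) = (\<Union>a\<in>set args. exp_structs (fst a))"
| "exp_structs (Member e m) = exp_structs e"
| "exp_structs (Assign e m e') = exp_structs e \<union> exp_structs e'"
| "exp_structs (Cond e0 e1 e2) = exp_structs e0 \<union> exp_structs e1 \<union> exp_structs e2"
| "exp_structs (Seq es) = (\<Union>a\<in>set es. exp_structs (fst a))"
| "exp_structs (Uop u e) = exp_structs e"
| "exp_structs (Bop b e1 e2) = exp_structs e1 \<union> exp_structs e2"
| "exp_structs (Malloc s) = {s}"
| "exp_structs (Mfree e) = exp_structs e"
| "exp_funs (Num n) = {}"
| "exp_funs Null = {}"
| "exp_funs (Var x) = {}"
| "exp_funs (App f args) = insert f (\<Union>a\<in>set args. exp_funs (fst a))"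
| "exp_funs (Member e m) = exp_funs e"
| "exp_funs (Assign e m e') = exp_funs e \<union> exp_funs e'"
| "exp_funs (Cond e0 e1 e2) = exp_funs e0 \<union> exp_funs e1 \<union> exp_funs e2"
| "exp_funs (Seq es) = (\<Union>a\<in>set es. exp_funs (fst a))"
| "exp_funs (Uop u e) = exp_funs e"
| "exp_funs (Bop b e1 e2) = exp_funs e1 \<union> exp_funs e2"
| "exp_funs (Malloc s) = {}"
| "exp_funs (Mfree e) = exp_funs e"

definition prog_structs :: "'f prog \<Rightarrow> name set" where
  "prog_structs P =
     (\<Union>sd\<in>set (structs P). \<Union>(T, m, \<psi>)\<in>set (sd_members sd). ty_structs T)
   \<union> (\<Union>fd\<in>set (funs P). ty_structs (fd_ret fd) \<union> (\<Union>(T, x, \<psi>)\<in>set (fd_params fd). ty_structs T)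
        \<union> exp_structs (fd_body fd))"

definition prog_funs :: "'f prog \<Rightarrow> name set" where
  "prog_funs P = (\<Union>fd\<in>set (funs P). exp_funs (fd_body fd))"

definition sane :: "'f prog \<Rightarrow> bool" where
  "sane P \<longleftrightarrow> (\<forall>s\<in>prog_structs P. lookup_struct P s \<noteq> None)
     \<and> (\<forall>f\<in>prog_funs P. lookup_fun P f \<noteq> None)
     \<and> (\<exists>e a. lookup_fun P ''main'' = Some (FDef TInt ''main'' [] e a))"

definition ann_ty :: "'f prog \<Rightarrow> ty \<Rightarrow> 'f form" where
  "ann_ty P T = (case T of TStruct s \<Rightarrow>
       (case lookup_struct P s of Some sd \<Rightarrow> sd_ann sd | None \<Rightarrow> FTrue)
     | _ \<Rightarrow> FTrue)"

definition subty :: "ty \<Rightarrow> ty \<Rightarrow> bool" where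
  "subty T T' \<longleftrightarrow> T = T' \<or> (T = TVoidPtr \<and> (\<exists>s. T' = TStruct s))"

definition max_le :: "ty \<Rightarrow> ty \<Rightarrow> ty \<Rightarrow> bool" where
  "max_le T1 T2 T3 \<longleftrightarrow> (subty T1 T2 \<and> T3 = T2) \<or> (subty T2 T1 \<and> T3 = T1)"

primrec uop_ty :: "uop \<Rightarrow> ty \<Rightarrow> bool" where
  "uop_ty UNeg T = (T = TInt)"
| "uop_ty UNot T = True"

definition bop_ty :: "bop \<Rightarrow> ty \<Rightarrow> bool" where
  "bop_ty b T = (if b \<in> {BEq, BNeq} then True else T = TInt)"

type_synonym 'f tenv = "(name \<times> ty \<times> 'f form) list"

datatype 'f judg =
    JPrg "'f form"
  | JStruct "'f form" "'f sdef"
  | JFun "'f form" "'f fdef"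
  | JExp "'f form" "'f tenv" "'f exp" ty

definition exists_ann :: "('f exp \<times> 'f form) list \<Rightarrow> 'f form" where
  "exists_ann es = ors (map snd es)"

definition neverLast :: "nat \<Rightarrow> ('f exp \<times> 'f form) list \<Rightarrow> 'f form" where
  "neverLast k es = ors (FNot (snd (es ! k)) # map snd (drop (Suc k) es))"

inductive rule :: "'f prog \<Rightarrow> 'f judg \<Rightarrow> 'f judg list \<Rightarrow> bool" for P :: "'f prog" where
  FT_prg: "\<lbrakk> sane P; lookup_fun P ''main'' = Some fd; fd_ann fd = FTrue \<rbrakk> \<Longrightarrow>
     rule P (JPrg \<phi>)
       (map (\<lambda>sd. JStruct (FAnd \<phi> (sd_ann sd)) sd) (structs P)
        @ map (\<lambda>fd. JFun (FAnd \<phi> (fd_ann fd)) fd) (funs P))"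
| FT_struct: "\<lbrakk> \<forall>(T, m, \<psi>)\<in>set ms. entails \<theta> (FImp \<psi> (ann_ty P T)) \<rbrakk> \<Longrightarrow>
     rule P (JStruct \<theta> (SDef s ms a)) []"
| FT_fun: "\<lbrakk> entails \<theta> (ann_ty P T0); \<forall>(T, x, \<psi>)\<in>set ps. entails \<theta> (FImp \<psi> (ann_ty P T));
     subty T' T0 \<rbrakk> \<Longrightarrow>
     rule P (JFun \<theta> (FDef T0 f ps e a)) [JExp \<theta> (map (\<lambda>(T, x, \<psi>). (x, T, \<psi>)) ps) e T']"
| FT_int: "rule P (JExp \<theta> \<Delta> (Num n) TInt) []"
| FT_null: "rule P (JExp \<theta> \<Delta> Null TVoidPtr) []"
| FT_par: "\<lbrakk> (x, T, \<psi>) \<in> set \<Delta>; entails \<theta> \<psi> \<rbrakk> \<Longrightarrow> rule P (JExp \<theta> \<Delta> (Var x) T) []"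
| FT_app: "\<lbrakk> lookup_fun P f = Some (FDef T0 f' ps body a); entails \<theta> a;
     length args = length ps; length Ts' = length args;
     \<forall>i<length args. subty (Ts' ! i) (fst (ps ! i))
        \<and> entails \<theta> (FIff (snd (args ! i)) (snd (snd (ps ! i)))) \<rbrakk> \<Longrightarrow>
     rule P (JExp \<theta> \<Delta> (App f args) T0)
       (map (\<lambda>i. JExp \<theta> \<Delta> (fst (args ! i)) (Ts' ! i)) [0..<length args])"
| FT_member: "\<lbrakk> lookup_struct P s = Some sd; lookup_member sd m = Some (T, \<psi>); entails \<theta> \<psi> \<rbrakk> \<Longrightarrow>
     rule P (JExp \<theta> \<Delta> (Member e0 m) T) [JExp \<theta> \<Delta> e0 (TStruct s)]"
| FT_assign: "\<lbrakk> lookup_struct P s = Some sd; lookup_member sd m = Some (T, \<psi>); entails \<theta> \<psi>;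
     subty T1 T \<rbrakk> \<Longrightarrow>
     rule P (JExp \<theta> \<Delta> (Assign e0 m e1) T) [JExp \<theta> \<Delta> e0 (TStruct s), JExp \<theta> \<Delta> e1 T1]"
| FT_cond: "max_le T1 T2 T3 \<Longrightarrow>
     rule P (JExp \<theta> \<Delta> (Cond e0 e1 e2) T3)
       [JExp \<theta> \<Delta> e0 T0, JExp \<theta> \<Delta> e1 T1, JExp \<theta> \<Delta> e2 T2]"
| FT_seq: "\<lbrakk> es \<noteq> []; entails \<theta> (exists_ann es); length Ts = length es; T = last Ts;
     \<forall>i<length es. Ts ! i \<noteq> T \<longrightarrow> entails \<theta> (neverLast i es) \<rbrakk> \<Longrightarrow>
     rule P (JExp \<theta> \<Delta> (Seq es) T)
       (map (\<lambda>i. JExp (FAnd \<theta> (snd (es ! i))) \<Delta> (fst (es ! i)) (Ts ! i)) [0..<length es])"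
| FT_uop: "uop_ty u T0 \<Longrightarrow> rule P (JExp \<theta> \<Delta> (Uop u e0) TInt) [JExp \<theta> \<Delta> e0 T0]"
| FT_bop: "\<lbrakk> max_le T1 T2 T3; bop_ty b T3 \<rbrakk> \<Longrightarrow>
     rule P (JExp \<theta> \<Delta> (Bop b e1 e2) TInt) [JExp \<theta> \<Delta> e1 T1, JExp \<theta> \<Delta> e2 T2]"
| FT_malloc: "\<lbrakk> lookup_struct P s = Some sd; entails \<theta> (sd_ann sd) \<rbrakk> \<Longrightarrow>
     rule P (JExp \<theta> \<Delta> (Malloc s) (TStruct s)) []"
| FT_mfree: "rule P (JExp \<theta> \<Delta> (Mfree e0) TVoidPtr) [JExp \<theta> \<Delta> e0 (TStruct s)]"

datatype 'f dtree = DNode (droot: "'f judg") (dsubs: "'f dtree list")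

inductive derivation :: "'f prog \<Rightarrow> 'f dtree \<Rightarrow> bool" for P :: "'f prog" where
  "\<lbrakk> rule P J (map droot ts); \<forall>t\<in>set ts. derivation P t \<rbrakk> \<Longrightarrow> derivation P (DNode J ts)"

inductive occurs_in :: "'f judg \<Rightarrow> 'f dtree \<Rightarrow> bool" where
  here: "occurs_in J (DNode J ts)"
| below: "\<lbrakk> t \<in> set ts; occurs_in J t \<rbrakk> \<Longrightarrow> occurs_in J (DNode J' ts)"

end

theory Submission
  imports Defs
begin

lemma eval_ors: "eval v (ors xs) \<longleftrightarrow> (\<exists>x\<in>set xs. eval v x)"
  by (induction xs rule: ors.induct) auto

lemma ent: "entails a b \<longleftrightarrow> (\<forall>v. eval v a \<longrightarrow> eval v b)"
  by (simp add: entails_def)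

definition denv :: "'f prog \<Rightarrow> 'f form \<Rightarrow> 'f tenv \<Rightarrow> bool" where
  "denv P \<theta> \<Delta> \<longleftrightarrow> (\<forall>(x, T, \<psi>)\<in>set \<Delta>. entails \<theta> (FImp \<psi> (ann_ty P T)))"

lemma denv_map: "denv P \<theta> (map (\<lambda>(T, x, \<psi>). (x, T, \<psi>)) ps) \<longleftrightarrow>
   (\<forall>(T, x, \<psi>)\<in>set ps. entails \<theta> (FImp \<psi> (ann_ty P T)))"
  by (auto simp: denv_def)

lemma child_shape:
  assumes "rule P (JExp \<theta> \<Delta> e T) Js" "J \<in> set Js"
  shows "\<exists>\<theta>c ec Tc. J = JExp \<theta>c \<Delta> ec Tc \<and> entails \<theta>c \<theta>"
  using assms by (cases rule: rule.cases) (auto simp: ent)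

lemma ann_struct: "lookup_struct P s = Some sd \<Longrightarrow> ann_ty P (TStruct s) = sd_ann sd"
  by (simp add: ann_ty_def)

lemma member_in: "lookup_member sd m = Some (T, \<psi>) \<Longrightarrow> (T, m, \<psi>) \<in> set (sd_members sd)"
  unfolding lookup_member_def by (auto dest!: map_of_SomeD)

lemma struct_in: "lookup_struct P s = Some sd \<Longrightarrow> sd \<in> set (structs P)"
  unfolding lookup_struct_def by (auto dest!: map_of_SomeD)

lemma fun_in: "lookup_fun P f = Some fd \<Longrightarrow> fd \<in> set (funs P)"
  unfolding lookup_fun_def by (auto dest!: map_of_SomeD)

lemma root_ok:
  assumes r: "rule P (JExp \<theta> \<Delta> e T) Js"
    and ch: "\<And>\<theta>c \<Delta>c ec Tc. JExp \<theta>c \<Delta>c ec Tc \<in> set Js \<Longrightarrow> entails \<theta>c (ann_ty P Tc)"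
    and ph: "entails \<theta> \<phi>" and de: "denv P \<theta> \<Delta>"
    and GF: "\<forall>fd\<in>set (funs P). entails (FAnd \<phi> (fd_ann fd)) (ann_ty P (fd_ret fd))"
    and GS: "\<forall>sd\<in>set (structs P). \<forall>(T, m, \<psi>)\<in>set (sd_members sd).
               entails (FAnd \<phi> (sd_ann sd)) (FImp \<psi> (ann_ty P T))"
  shows "entails \<theta> (ann_ty P T)"
  using r
proof (cases rule: rule.cases)
  case (FT_par x \<psi>)
  then have "entails \<theta> (FImp \<psi> (ann_ty P T))" using de unfolding denv_def by fast
  then show ?thesis using FT_par unfolding ent by simp
next
  case (FT_app f f' ps body a args Ts')
  then have "FDef T f' ps body a \<in> set (funs P)" using fun_in by fast
  then have "entails (FAnd \<phi> a) (ann_ty P T)" using GF by fastforce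
  then show ?thesis using FT_app ph unfolding ent by simp
next
  case (FT_member s sd m \<psi> e0)
  have "entails \<theta> (sd_ann sd)" using ch[of \<theta> \<Delta> e0 "TStruct s"] FT_member ann_struct[of P s sd] by auto
  moreover have "sd \<in> set (structs P)" using FT_member struct_in by fast
  moreover have "(T, m, \<psi>) \<in> set (sd_members sd)" using FT_member member_in by fast
  ultimately have "entails (FAnd \<phi> (sd_ann sd)) (FImp \<psi> (ann_ty P T))"
    "entails \<theta> (sd_ann sd)" using GS by fastforce+
  then show ?thesis using FT_member ph unfolding ent by simp
next
  case (FT_assign s sd m \<psi> T1 e0 e1)
  have "entails \<theta> (sd_ann sd)" using ch[of \<theta> \<Delta> e0 "TStruct s"] FT_assign ann_struct[of P s sd] by auto
  moreover have "sd \<in> set (structs P)" using FT_assign struct_in by fast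
  moreover have "(T, m, \<psi>) \<in> set (sd_members sd)" using FT_assign member_in by fast
  ultimately have "entails (FAnd \<phi> (sd_ann sd)) (FImp \<psi> (ann_ty P T))"
    "entails \<theta> (sd_ann sd)" using GS by fastforce+
  then show ?thesis using FT_assign ph unfolding ent by simp
next
  case (FT_cond T1 T2 e0 e1 e2 T0)
  then show ?thesis using ch unfolding max_le_def by auto
next
  case (FT_seq es Ts)
  show ?thesis unfolding ent
  proof (intro allI impI)
    fix v assume th: "eval v \<theta>"
    let ?S = "{i. i < length es \<and> eval v (snd (es ! i))}"
    have "\<exists>i<length es. eval v (snd (es ! i))"
    proof -
      have "entails \<theta> (exists_ann es)" using FT_seq by simp
      then have "\<exists>x\<in>set (map snd es). eval v x" using th unfolding ent exists_ann_def eval_ors by blast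
      then show ?thesis by (auto simp: in_set_conv_nth) (metis snd_conv)
    qed
    then have ne: "?S \<noteq> {}" by auto
    have fin: "finite ?S" by auto
    define i where "i = Max ?S"
    have iS: "i \<in> ?S" using Max_in[OF fin ne] i_def by simp
    have mx: "\<And>j. j < length es \<Longrightarrow> i < j \<Longrightarrow> \<not> eval v (snd (es ! j))"
    proof
      fix j assume "j < length es" "i < j" "eval v (snd (es ! j))"
      then have "j \<le> i" using Max_ge[OF fin, of j] i_def by simp
      then show False using \<open>i < j\<close> by simp
    qed
    have TiT: "Ts ! i = T"
    proof (rule ccontr)
      assume "Ts ! i \<noteq> T"
      then have "eval v (neverLast i es)" using FT_seq iS th unfolding ent by auto
      then obtain x where "x \<in> set (map snd (drop (Suc i) es))" "eval v x"
        using iS unfolding neverLast_def eval_ors by auto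
      then obtain k where "k < length es - Suc i" "x = snd (es ! (Suc i + k))"
        by (auto simp: in_set_conv_nth)
      then show False using mx[of "Suc i + k"] \<open>eval v x\<close> by auto
    qed
    have "JExp (FAnd \<theta> (snd (es ! i))) \<Delta> (fst (es ! i)) (Ts ! i) \<in> set Js"
      using FT_seq iS by auto
    then have "entails (FAnd \<theta> (snd (es ! i))) (ann_ty P (Ts ! i))" by (rule ch)
    then show "eval v (ann_ty P T)" using TiT th iS unfolding ent by auto
  qed
next
  case (FT_malloc s sd)
  then show ?thesis by (simp add: ann_struct)
qed (auto simp: ann_ty_def ent)

lemma exp_ok:
  assumes GF: "\<forall>fd\<in>set (funs P). entails (FAnd \<phi> (fd_ann fd)) (ann_ty P (fd_ret fd))"
    and GS: "\<forall>sd\<in>set (structs P). \<forall>(T, m, \<psi>)\<in>set (sd_members sd).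
               entails (FAnd \<phi> (sd_ann sd)) (FImp \<psi> (ann_ty P T))"
  shows "derivation P t \<Longrightarrow> \<forall>\<theta> \<Delta> e T. droot t = JExp \<theta> \<Delta> e T \<longrightarrow> entails \<theta> \<phi> \<longrightarrow> denv P \<theta> \<Delta>
     \<longrightarrow> (\<forall>\<theta>' \<Delta>' e' T'. occurs_in (JExp \<theta>' \<Delta>' e' T') t \<longrightarrow> entails \<theta>' (ann_ty P T'))"
proof (induction rule: derivation.induct)
  case (1 J ts)
  show ?case
  proof (intro allI impI)
    fix \<theta> \<Delta> e T \<theta>' \<Delta>' e' T'
    assume r: "droot (DNode J ts) = JExp \<theta> \<Delta> e T" and ph: "entails \<theta> \<phi>" and de: "denv P \<theta> \<Delta>"
      and oc: "occurs_in (JExp \<theta>' \<Delta>' e' T') (DNode J ts)"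
    have rl: "rule P (JExp \<theta> \<Delta> e T) (map droot ts)" using 1 r by simp
    have chQ: "\<forall>\<theta>' \<Delta>' e' T'. occurs_in (JExp \<theta>' \<Delta>' e' T') t \<longrightarrow> entails \<theta>' (ann_ty P T')"
      if t: "t \<in> set ts" for t
    proof -
      obtain \<theta>c ec Tc where tc: "droot t = JExp \<theta>c \<Delta> ec Tc" "entails \<theta>c \<theta>"
        using child_shape[OF rl] t by fastforce
      have "entails \<theta>c \<phi>" using tc ph unfolding ent by blast
      moreover have "denv P \<theta>c \<Delta>" using de tc unfolding denv_def ent by fast
      ultimately show ?thesis using 1(2) t tc by blast
    qed
    have ch: "entails \<theta>c (ann_ty P Tc)" if inJ: "JExp \<theta>c \<Delta>c ec Tc \<in> set (map droot ts)" for \<theta>c \<Delta>c ec Tc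
    proof -
      obtain t where t: "t \<in> set ts" "droot t = JExp \<theta>c \<Delta>c ec Tc" using inJ by auto
      have "occurs_in (JExp \<theta>c \<Delta>c ec Tc) t" using t(2) occurs_in.here[of _ "dsubs t"]
        by (metis dtree.collapse)
      then show ?thesis using chQ[OF t(1)] by blast
    qed
    have rootok: "entails \<theta> (ann_ty P T)" by (rule root_ok[OF rl ch ph de GF GS])
    show "entails \<theta>' (ann_ty P T')" using oc
    proof (cases rule: occurs_in.cases)
      case here
      then show ?thesis using r rootok by simp
    next
      case (below t)
      then show ?thesis using chQ by blast
    qed
  qed
qed

theorem lemma3:
  fixes P :: "'f prog" and \<phi> :: "'f form" and D :: "'f dtree"
  assumes "distinct_names P"
    and "derivation P D"
    and "droot D = JPrg \<phi>"
    and "occurs_in (JExp \<theta> \<Delta> e T) D"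
  shows "entails \<theta> (ann_ty P T)"
proof -
  obtain ts where D: "D = DNode (JPrg \<phi>) ts" using assms(3) by (metis dtree.collapse)
  have rl: "rule P (JPrg \<phi>) (map droot ts)" and dts: "\<forall>t\<in>set ts. derivation P t"
    using assms(2) D by (auto elim: derivation.cases)
  have ms: "map droot ts = map (\<lambda>sd. JStruct (FAnd \<phi> (sd_ann sd)) sd) (structs P)
        @ map (\<lambda>fd. JFun (FAnd \<phi> (fd_ann fd)) fd) (funs P)"
    using rl by (cases rule: rule.cases) auto
  have GF: "\<forall>fd\<in>set (funs P). entails (FAnd \<phi> (fd_ann fd)) (ann_ty P (fd_ret fd))"
  proof
    fix fd assume fd: "fd \<in> set (funs P)"
    then have "JFun (FAnd \<phi> (fd_ann fd)) fd \<in> set (map droot ts)" unfolding ms by auto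
    then obtain t where t: "t \<in> set ts" "droot t = JFun (FAnd \<phi> (fd_ann fd)) fd" by auto
    then obtain us where "t = DNode (JFun (FAnd \<phi> (fd_ann fd)) fd) us" by (metis dtree.collapse)
    then have "rule P (JFun (FAnd \<phi> (fd_ann fd)) fd) (map droot us)" using dts t
      by (auto elim: derivation.cases)
    then show "entails (FAnd \<phi> (fd_ann fd)) (ann_ty P (fd_ret fd))"
      by (cases rule: rule.cases) auto
  qed
  have GS: "\<forall>sd\<in>set (structs P). \<forall>(T, m, \<psi>)\<in>set (sd_members sd).
               entails (FAnd \<phi> (sd_ann sd)) (FImp \<psi> (ann_ty P T))"
  proof
    fix sd assume sd: "sd \<in> set (structs P)"
    then have "JStruct (FAnd \<phi> (sd_ann sd)) sd \<in> set (map droot ts)" unfolding ms by auto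
    then obtain t where t: "t \<in> set ts" "droot t = JStruct (FAnd \<phi> (sd_ann sd)) sd" by auto
    then obtain us where "t = DNode (JStruct (FAnd \<phi> (sd_ann sd)) sd) us" by (metis dtree.collapse)
    then have "rule P (JStruct (FAnd \<phi> (sd_ann sd)) sd) (map droot us)" using dts t
      by (auto elim: derivation.cases)
    then show "\<forall>(T, m, \<psi>)\<in>set (sd_members sd). entails (FAnd \<phi> (sd_ann sd)) (FImp \<psi> (ann_ty P T))"
      by (cases rule: rule.cases) auto
  qed
  note EX = exp_ok[OF GF GS]
  from assms(4) obtain t where t: "t \<in> set ts" "occurs_in (JExp \<theta> \<Delta> e T) t"
    unfolding D by (cases rule: occurs_in.cases) auto
  have "droot t \<in> set (map droot ts)" using t by auto
  then consider (s) sd where "droot t = JStruct (FAnd \<phi> (sd_ann sd)) sd"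
    | (f) fd where "fd \<in> set (funs P)" "droot t = JFun (FAnd \<phi> (fd_ann fd)) fd"
    unfolding ms by auto
  then show ?thesis
  proof cases
    case s
    then obtain us where tu: "t = DNode (JStruct (FAnd \<phi> (sd_ann sd)) sd) us" by (metis dtree.collapse)
    then have "rule P (JStruct (FAnd \<phi> (sd_ann sd)) sd) (map droot us)" using dts t
      by (auto elim: derivation.cases)
    then have "us = []" by (cases rule: rule.cases) auto
    then show ?thesis using t(2) tu by (auto elim: occurs_in.cases)
  next
    case f
    then obtain us where tu: "t = DNode (JFun (FAnd \<phi> (fd_ann fd)) fd) us" by (metis dtree.collapse)
    have "derivation P t" using dts t by auto
    then have dus: "\<forall>u\<in>set us. derivation P u" using tu by (cases rule: derivation.cases) auto
    have "rule P (JFun (FAnd \<phi> (fd_ann fd)) fd) (map droot us)" using dts t tu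
      by (auto elim: derivation.cases)
    then obtain u T' where u: "us = [u]" "droot u = JExp (FAnd \<phi> (fd_ann fd))
         (map (\<lambda>(T, x, \<psi>). (x, T, \<psi>)) (fd_params fd)) (fd_body fd) T'"
      "denv P (FAnd \<phi> (fd_ann fd)) (map (\<lambda>(T, x, \<psi>). (x, T, \<psi>)) (fd_params fd))"
      by (cases rule: rule.cases) (auto simp only: denv_map; auto)
    have "occurs_in (JExp \<theta> \<Delta> e T) u" using t(2) tu u(1) by (auto elim: occurs_in.cases)
    moreover have "entails (FAnd \<phi> (fd_ann fd)) \<phi>" by (simp add: ent)
    ultimately show ?thesis using EX[of u] dus u by auto
  qed
qed

end
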